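(* Let $X$ and $Y$ be real-valued random variables and consider the two Bayesian causal models $M_{X\rightarrow Y}$ and $M_{Y\rightarrow X}$ defined as follows. In $M_{X\rightarrow Y}$, the marginal density of the cause is $p(x\mid M_{X\rightarrow Y})=\mathcal{N}(x\mid 0,1)$ and the conditional density of the effect is $p(y\mid x,\boldsymbol{\theta}_Y,M_{X\rightarrow Y})=\mathcal{N}\big(y\mid \mu(x;\boldsymbol{\theta}_Y),\sigma^2(x;\boldsymbol{\theta}_Y)\big)$, where $\mu(\cdot;\boldsymbol{\theta}_Y)=f_{Y,1}(\cdot;\boldsymbol{\theta}_Y)$ and $\sigma(\cdot;\boldsymbol{\theta}_Y)=\zeta\big(f_{Y,2}(\cdot;\boldsymbol{\theta}_Y)\big)$ for a neural network $\mathbf{f}_Y=(f_{Y,1},f_{Y,2}):\mathbb{R}\to\mathbb{R}^2$ with one hidden layer and parameters $\boldsymbol{\theta}_Y$, and $\zeta$ is a positive link function (e.g. $\exp$ or softplus). The parameters $\boldsymbol{\theta}_Y$ have independent zero-mean Gaussian priors: each weight $w_{ij}\sim\mathcal{N}(0,z_{ij}^2)$ and each bias $b_j\sim\mathcal{N}(0,\sigma_b^2)$. The model $M_{Y\rightarrow X}$ is defined symmetrically with the roles of $X$ and $Y$ exchanged (marginal $\mathcal{N}(y\mid0,1)$, conditional $\mathcal{N}(x\mid \mu(y;\boldsymbol{\theta}_X),\sigma^2(y;\boldsymbol{\theta}_X))$ given by an analogous one-hidden-layer network with the same type of Gaussian priors). Then $M_{X\rightarrow Y}$ and $M_{Y\rightarrow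 X}$ are not separable-compatible.
   Context: A Bayesian causal model $M_{X\rightarrow Y}$ consists of a class $\mathcal{C}_X$ of marginal distributions $m_X$ of $X$, a class $\mathcal{C}_{Y\mid X}$ of conditional distributions $c_{Y\mid X}$ of $Y$ given $X$, and a factorized prior $\pi_{X\rightarrow Y}(m_X,c_{Y\mid X})=\pi_X(m_X)\pi_{Y\mid X}(c_{Y\mid X})$; similarly $M_{Y\rightarrow X}$ has $\mathcal{C}_Y$, $\mathcal{C}_{X\mid Y}$ and prior $\pi_{Y\rightarrow X}(m_Y,c_{X\mid Y})=\pi_Y(m_Y)\pi_{X\mid Y}(c_{X\mid Y})$. Let $\gamma:\mathcal{C}_X\times\mathcal{C}_{Y\mid X}\to\mathcal{C}_Y\times\mathcal{C}_{X\mid Y}$ be the bijection mapping $(m_X,c_{Y\mid X})$ to the unique $(m_Y,c_{X\mid Y})$ with $m_X(x)c_{Y\mid X}(y\mid x)=m_Y(y)c_{X\mid Y}(x\mid y)$ for all $x,y$ (i.e. the anti-causal factorization of the same joint). The two models are called separable-compatible if such a bijection $\gamma$ exists, the push-forward $\gamma_\sharp\pi_{X\rightarrow Y}$ is separable with respect to $\mathcal{C}_Y\times\mathcal{C}_{X\mid Y}$ and equals $\pi_Y(m_Y)\pi_{X\mid Y}(c_{X\mid Y})$, and the push-forward $\gamma^{-1}_\sharp\pi_{Y\rightarrow X}$ is separable with respect to $\mathcal{C}_X\times\mathcal{C}_{Y\mid X}$ (equivalently: the anti-causal factorization of each model lies in the same distribution classes as the other model, with a prior that factorizes into independent priors matching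 the other model's priors). *)

theory Defs
  imports "HOL-Probability.Probability"
begin

text \<open>A conditional density
  c(b | a) is represented as a function c :: real => real => real with c a b = c(b | a).\<close>

definition fun_alg :: "(real \<Rightarrow> real) measure" where
  "fun_alg = Pi\<^sub>M UNIV (\<lambda>_::real. borel)"

definition cond_alg :: "(real \<Rightarrow> real \<Rightarrow> real) measure" where
  "cond_alg = Pi\<^sub>M UNIV (\<lambda>_::real. fun_alg)"

text \<open>A Bayesian causal model for cause A and effect B: the prior on the class of marginals
  of the cause (its space is the class C_A) and the prior on the class of conditionals
  of the effect given the cause (its space is the class C_{B|A}).\<close>

record bcm =
  bcm_marg :: "(real \<Rightarrow> real) measure"
  bcm_cond :: "(real \<Rightarrow> real \<Rightarrow> real) measure"

definition bcm_prior :: "bcm \<Rightarrow> ((real \<Rightarrow> real) \<times> (real \<Rightarrow> real \<Rightarrow> real)) measure" where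
  "bcm_prior M = bcm_marg M \<Otimes>\<^sub>M bcm_cond M"

text \<open>M is a model X -> Y, N a model Y -> X.  gamma maps (m_X, c_{Y|X}) to the anti-causal
  factorization (m_Y, c_{X|Y}) of the same joint; the push-forward of the prior of M is
  the (factorized) prior of N and the push-forward of the prior of N under the inverse
  is the (factorized) prior of M.\<close>

definition separable_compatible :: "bcm \<Rightarrow> bcm \<Rightarrow> bool" where
  "separable_compatible M N \<longleftrightarrow>
     (\<exists>\<gamma>. bij_betw \<gamma> (space (bcm_prior M)) (space (bcm_prior N)) \<and>
        (\<forall>p \<in> space (bcm_prior M). \<forall>x y.
            fst p x * snd p x y = fst (\<gamma> p) y * snd (\<gamma> p) y x) \<and>
        \<gamma> \<in> measurable (bcm_prior M) (bcm_prior N) \<and>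
        distr (bcm_prior M) (bcm_prior N) \<gamma> = bcm_prior N \<and>
        the_inv_into (space (bcm_prior M)) \<gamma> \<in> measurable (bcm_prior N) (bcm_prior M) \<and>
        distr (bcm_prior N) (bcm_prior M) (the_inv_into (space (bcm_prior M)) \<gamma>) = bcm_prior M)"

text \<open>Parameters of a one-hidden-layer network R -> R^2 with H hidden units:
  input weights W_in i, hidden biases B_hid i, output weights W_out k i and output
  biases B_out k, where k = True is the mean output f_1 and k = False the scale output f_2.\<close>

datatype nn_idx = W_in nat | B_hid nat | W_out bool nat | B_out bool

definition nn_idx_set :: "nat \<Rightarrow> nn_idx set" where
  "nn_idx_set H = {W_in i | i. i < H} \<union> {B_hid i | i. i < H} \<union>
                  {W_out k i | k i. i < H} \<union> {B_out k | k. True}"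

definition is_weight :: "nn_idx \<Rightarrow> bool" where
  "is_weight j \<longleftrightarrow> (case j of W_in _ \<Rightarrow> True | W_out _ _ \<Rightarrow> True | _ \<Rightarrow> False)"

definition nn_out :: "nat \<Rightarrow> (real \<Rightarrow> real) \<Rightarrow> (nn_idx \<Rightarrow> real) \<Rightarrow> bool \<Rightarrow> real \<Rightarrow> real" where
  "nn_out H \<phi> \<theta> k t =
     (\<Sum>i<H. \<theta> (W_out k i) * \<phi> (\<theta> (W_in i) * t + \<theta> (B_hid i))) + \<theta> (B_out k)"

text \<open>Conditional density N(b | mu(a; theta), sigma(a; theta)^2), with mu = f_1 and
  sigma = zeta o f_2 (normal_density m s is the Gaussian density with mean m, std. dev. s).\<close>
definition nn_cond :: "nat \<Rightarrow> (real \<Rightarrow> real) \<Rightarrow> (real \<Rightarrow> real) \<Rightarrow> (nn_idx \<Rightarrow> real)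
                        \<Rightarrow> real \<Rightarrow> real \<Rightarrow> real" where
  "nn_cond H \<phi> \<zeta> \<theta> a b = normal_density (nn_out H \<phi> \<theta> True a) (\<zeta> (nn_out H \<phi> \<theta> False a)) b"

definition nn_param_prior :: "nat \<Rightarrow> (nn_idx \<Rightarrow> real) \<Rightarrow> real \<Rightarrow> (nn_idx \<Rightarrow> real) measure" where
  "nn_param_prior H z sb =
     (\<Pi>\<^sub>M j \<in> nn_idx_set H. density lborel (normal_density 0 (if is_weight j then z j else sb)))"

definition nn_cond_class :: "nat \<Rightarrow> (real \<Rightarrow> real) \<Rightarrow> (real \<Rightarrow> real) \<Rightarrow> (real \<Rightarrow> real \<Rightarrow> real) set" where
  "nn_cond_class H \<phi> \<zeta> = (\<lambda>\<theta>. nn_cond H \<phi> \<zeta> \<theta>) ` (PiE (nn_idx_set H) (\<lambda>_. UNIV))"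

definition nn_cond_prior :: "nat \<Rightarrow> (real \<Rightarrow> real) \<Rightarrow> (real \<Rightarrow> real) \<Rightarrow> (nn_idx \<Rightarrow> real) \<Rightarrow> real
                              \<Rightarrow> (real \<Rightarrow> real \<Rightarrow> real) measure" where
  "nn_cond_prior H \<phi> \<zeta> z sb =
     distr (nn_param_prior H z sb) (restrict_space cond_alg (nn_cond_class H \<phi> \<zeta>))
           (\<lambda>\<theta>. nn_cond H \<phi> \<zeta> \<theta>)"

definition std_marg_prior :: "(real \<Rightarrow> real) measure" where
  "std_marg_prior = return (restrict_space fun_alg {normal_density 0 1}) (normal_density 0 1)"

definition nn_model :: "nat \<Rightarrow> (real \<Rightarrow> real) \<Rightarrow> (real \<Rightarrow> real) \<Rightarrow> (nn_idx \<Rightarrow> real) \<Rightarrow> real \<Rightarrow> bcm" where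
  "nn_model H \<phi> \<zeta> z sb = \<lparr> bcm_marg = std_marg_prior, bcm_cond = nn_cond_prior H \<phi> \<zeta> z sb \<rparr>"

end

theory Submission
  imports Defs
begin

lemma space_fun_alg[simp]: "space fun_alg = UNIV"
  by (simp add: fun_alg_def space_PiM)

lemma space_cond_alg[simp]: "space cond_alg = UNIV"
  by (simp add: cond_alg_def space_PiM)

lemma space_nn_model:
  "space (bcm_prior (nn_model H \<phi> \<zeta> z sb)) = {normal_density 0 1} \<times> nn_cond_class H \<phi> \<zeta>"
  by (simp add: bcm_prior_def nn_model_def space_pair_measure std_marg_prior_def
      nn_cond_prior_def space_restrict_space)

lemma no_gauss_eq:
  assumes s: "s > 0" and eq: "\<And>y. normal_density 5 s y = normal_density 0 1 y"
  shows False
proof -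
  have "normal_density 0 1 5 = normal_density 0 1 (-5)"
    by (simp add: normal_density_def)
  hence "normal_density 5 s 5 = normal_density 5 s (-5)" using eq by simp
  hence "exp 0 = exp (- ((-5 - 5)\<^sup>2) / (2 * s\<^sup>2))"
    using s by (simp add: normal_density_def)
  hence "0 = - ((-5 - 5)\<^sup>2) / (2 * (s::real)\<^sup>2)" by simp
  thus False using s by (simp add: field_simps)
qed

theorem proposition4p2:
  fixes H1 H2 :: nat and \<phi>1 \<phi>2 \<zeta>1 \<zeta>2 :: "real \<Rightarrow> real"
    and z1 z2 :: "nn_idx \<Rightarrow> real" and sb1 sb2 :: real
  assumes "H1 > 0" and "H2 > 0"
    and "continuous_on UNIV \<phi>1" and "continuous_on UNIV \<phi>2"
    and "continuous_on UNIV \<zeta>1" and "continuous_on UNIV \<zeta>2"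
    and "\<And>t. \<zeta>1 t > 0" and "\<And>t. \<zeta>2 t > 0"
    and "\<And>j. z1 j > 0" and "\<And>j. z2 j > 0"
    and "sb1 > 0" and "sb2 > 0"
  shows "\<not> separable_compatible (nn_model H1 \<phi>1 \<zeta>1 z1 sb1) (nn_model H2 \<phi>2 \<zeta>2 z2 sb2)"
proof
  assume "separable_compatible (nn_model H1 \<phi>1 \<zeta>1 z1 sb1) (nn_model H2 \<phi>2 \<zeta>2 z2 sb2)"
  then obtain \<gamma> where bij: "bij_betw \<gamma> (space (bcm_prior (nn_model H1 \<phi>1 \<zeta>1 z1 sb1)))
      (space (bcm_prior (nn_model H2 \<phi>2 \<zeta>2 z2 sb2)))"
    and fac: "\<forall>p \<in> space (bcm_prior (nn_model H1 \<phi>1 \<zeta>1 z1 sb1)). \<forall>x y.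
            fst p x * snd p x y = fst (\<gamma> p) y * snd (\<gamma> p) y x"
    unfolding separable_compatible_def by blast
  define \<theta> where "\<theta> = restrict (\<lambda>j. if j = B_out True then (5::real) else 0) (nn_idx_set H1)"
  have th: "\<theta> \<in> PiE (nn_idx_set H1) (\<lambda>_. UNIV)" by (simp add: \<theta>_def)
  have inset: "W_out k i \<in> nn_idx_set H1" "B_out k \<in> nn_idx_set H1" if "i < H1" for k i
    using that by (auto simp: nn_idx_set_def)
  have bo: "B_out k \<in> nn_idx_set H1" for k by (auto simp: nn_idx_set_def)
  have out1: "nn_out H1 \<phi>1 \<theta> True t = 5" for t
  proof -
    have "(\<Sum>i<H1. \<theta> (W_out True i) * \<phi>1 (\<theta> (W_in i) * t + \<theta> (B_hid i))) = 0"
      by (rule sum.neutral) (simp add: \<theta>_def inset)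
    thus ?thesis unfolding nn_out_def using bo by (simp add: \<theta>_def)
  qed
  have out2: "nn_out H1 \<phi>1 \<theta> False t = 0" for t
  proof -
    have "(\<Sum>i<H1. \<theta> (W_out False i) * \<phi>1 (\<theta> (W_in i) * t + \<theta> (B_hid i))) = 0"
      by (rule sum.neutral) (simp add: \<theta>_def inset)
    thus ?thesis unfolding nn_out_def using bo by (simp add: \<theta>_def)
  qed
  define p where "p = (normal_density 0 1, nn_cond H1 \<phi>1 \<zeta>1 \<theta>)"
  have pin: "p \<in> space (bcm_prior (nn_model H1 \<phi>1 \<zeta>1 z1 sb1))"
    using th by (simp add: p_def space_nn_model nn_cond_class_def)
  hence gin: "\<gamma> p \<in> {normal_density 0 1} \<times> nn_cond_class H2 \<phi>2 \<zeta>2"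
    using bij by (auto simp: bij_betw_def space_nn_model)
  then obtain \<theta>' where g: "\<gamma> p = (normal_density 0 1, nn_cond H2 \<phi>2 \<zeta>2 \<theta>')"
    by (auto simp: nn_cond_class_def)
  define s where "s = \<zeta>1 0"
  have s: "s > 0" using assms(7) by (simp add: s_def)
  have eq: "normal_density 0 1 x * normal_density 5 s y =
      normal_density 0 1 y * normal_density (nn_out H2 \<phi>2 \<theta>' True y) (\<zeta>2 (nn_out H2 \<phi>2 \<theta>' False y)) x"
    for x y
    using fac pin g by (auto simp: p_def nn_cond_def out1 out2 s_def)
  have "normal_density 5 s y = normal_density 0 1 y" for y
  proof -
    have "(\<integral>x. normal_density 0 1 x * normal_density 5 s y \<partial>lborel) =
      (\<integral>x. normal_density 0 1 y * normal_density (nn_out H2 \<phi>2 \<theta>' True y) (\<zeta>2 (nn_out H2 \<phi>2 \<theta>' False y)) x \<partial>lborel)"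
      using eq by simp
    thus ?thesis using integral_normal_density[OF assms(8)] integral_normal_density[of 1] by simp
  qed
  thus False using no_gauss_eq s by blast
qed

end
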